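(* Let $\ell:K(H\times\mathrm{Id})\to HM$ be an abstract GSOS rule with $\ell$-interpretation $b:KC\to C$, and let $k=c^{-1}\cdot Hb^\sharp:HMC\to C$. Then $(C,k)$ is a completely iterative algebra for the functor $HM$.
   Context: Let $\mathcal A$ be a category with binary products and coproducts, let $H:\mathcal A\to\mathcal A$ be a functor with a terminal coalgebra $c:C\to HC$ (so $c$ is an isomorphism by Lambek's lemma), and let $K:\mathcal A\to\mathcal A$ be a functor such that every object $X$ has a free $K$-algebra $\varphi_X:KMX\to MX$ with universal morphism $\eta_X:X\to MX$. Then $(M,\eta,\mu)$ is the free monad on $K$, and $\kappa=\varphi\cdot K\eta:K\to M$. For a $K$-algebra $a:KA\to A$ let $a^\sharp:MA\to A$ be the unique $K$-algebra homomorphism with $a^\sharp\cdot\eta_A=\mathrm{id}_A$; it is an Eilenberg–Moore algebra for $M$. An abstract GSOS rule is a natural transformation $\ell:K(H\times\mathrm{Id})\to HM$; its $\ell$-interpretation is the unique morphism $b:KC\to C$ with $c\cdot b=Hb^\sharp\cdot\ell_C\cdot K\langle c,\mathrm{id}_C\rangle$. For an endofunctor $G$, a flat equation morphism in an object $A$ is a morphism $e:X\to GX+A$; a $G$-algebra $a:GA\to A$ is a completely iterative algebra (cia) if every flat equation morphism $e:X\to GX+A$ has a unique solution, i.e. a unique $e^\dagger:X\to A$ with $e^\dagger=[a,\mathrm{id}_A]\cdot(Ge^\dagger+\mathrm{id}_A)\cdot e$. *)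

theory Defs
  imports Main
begin

record ('o, 'm) category =
  Obj  :: "'o set"
  Arr  :: "'m set"
  Dom  :: "'m \<Rightarrow> 'o"
  Cod  :: "'m \<Rightarrow> 'o"
  Ide  :: "'o \<Rightarrow> 'm"
  Comp :: "'m \<Rightarrow> 'm \<Rightarrow> 'm"   \<comment> \<open>Comp g f = g \<cdot> f (first f, then g)\<close>

definition hom :: "('o, 'm) category \<Rightarrow> 'o \<Rightarrow> 'o \<Rightarrow> 'm set" where
  "hom A X Y = {f \<in> Arr A. Dom A f = X \<and> Cod A f = Y}"

definition is_category :: "('o, 'm) category \<Rightarrow> bool" where
  "is_category A \<longleftrightarrow>
     (\<forall>f \<in> Arr A. Dom A f \<in> Obj A \<and> Cod A f \<in> Obj A) \<and>
     (\<forall>X \<in> Obj A. Ide A X \<in> hom A X X) \<and>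
     (\<forall>X \<in> Obj A. \<forall>Y \<in> Obj A. \<forall>Z \<in> Obj A. \<forall>f \<in> hom A X Y. \<forall>g \<in> hom A Y Z.
        Comp A g f \<in> hom A X Z) \<and>
     (\<forall>f \<in> Arr A. Comp A f (Ide A (Dom A f)) = f \<and> Comp A (Ide A (Cod A f)) f = f) \<and>
     (\<forall>f \<in> Arr A. \<forall>g \<in> Arr A. \<forall>h \<in> Arr A. Cod A f = Dom A g \<longrightarrow> Cod A g = Dom A h \<longrightarrow>
        Comp A h (Comp A g f) = Comp A (Comp A h g) f)"

record ('o, 'm) endofunctor =
  FObj :: "'o \<Rightarrow> 'o"
  FArr :: "'m \<Rightarrow> 'm"

definition is_endofunctor :: "('o, 'm) category \<Rightarrow> ('o, 'm) endofunctor \<Rightarrow> bool" where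
  "is_endofunctor A F \<longleftrightarrow>
     (\<forall>X \<in> Obj A. FObj F X \<in> Obj A) \<and>
     (\<forall>X \<in> Obj A. \<forall>Y \<in> Obj A. \<forall>f \<in> hom A X Y. FArr F f \<in> hom A (FObj F X) (FObj F Y)) \<and>
     (\<forall>X \<in> Obj A. FArr F (Ide A X) = Ide A (FObj F X)) \<and>
     (\<forall>f \<in> Arr A. \<forall>g \<in> Arr A. Cod A f = Dom A g \<longrightarrow>
        FArr F (Comp A g f) = Comp A (FArr F g) (FArr F f))"

definition has_binary_products ::
  "('o, 'm) category \<Rightarrow> ('o \<Rightarrow> 'o \<Rightarrow> 'o) \<Rightarrow> ('o \<Rightarrow> 'o \<Rightarrow> 'm) \<Rightarrow> ('o \<Rightarrow> 'o \<Rightarrow> 'm) \<Rightarrow> bool" where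
  "has_binary_products A P p1 p2 \<longleftrightarrow>
     (\<forall>X \<in> Obj A. \<forall>Y \<in> Obj A.
        P X Y \<in> Obj A \<and> p1 X Y \<in> hom A (P X Y) X \<and> p2 X Y \<in> hom A (P X Y) Y \<and>
        (\<forall>Z \<in> Obj A. \<forall>f \<in> hom A Z X. \<forall>g \<in> hom A Z Y.
           (\<exists>!h. h \<in> hom A Z (P X Y) \<and> Comp A (p1 X Y) h = f \<and> Comp A (p2 X Y) h = g)))"

definition tuple ::
  "('o, 'm) category \<Rightarrow> ('o \<Rightarrow> 'o \<Rightarrow> 'o) \<Rightarrow> ('o \<Rightarrow> 'o \<Rightarrow> 'm) \<Rightarrow> ('o \<Rightarrow> 'o \<Rightarrow> 'm) \<Rightarrow> 'm \<Rightarrow> 'm \<Rightarrow> 'm" where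
  "tuple A P p1 p2 f g =
     (THE h. h \<in> hom A (Dom A f) (P (Cod A f) (Cod A g)) \<and>
             Comp A (p1 (Cod A f) (Cod A g)) h = f \<and> Comp A (p2 (Cod A f) (Cod A g)) h = g)"

definition prod_arr ::
  "('o, 'm) category \<Rightarrow> ('o \<Rightarrow> 'o \<Rightarrow> 'o) \<Rightarrow> ('o \<Rightarrow> 'o \<Rightarrow> 'm) \<Rightarrow> ('o \<Rightarrow> 'o \<Rightarrow> 'm) \<Rightarrow> 'm \<Rightarrow> 'm \<Rightarrow> 'm" where
  "prod_arr A P p1 p2 f g =
     tuple A P p1 p2 (Comp A f (p1 (Dom A f) (Dom A g))) (Comp A g (p2 (Dom A f) (Dom A g)))"

definition has_binary_coproducts ::
  "('o, 'm) category \<Rightarrow> ('o \<Rightarrow> 'o \<Rightarrow> 'o) \<Rightarrow> ('o \<Rightarrow> 'o \<Rightarrow> 'm) \<Rightarrow> ('o \<Rightarrow> 'o \<Rightarrow> 'm) \<Rightarrow> bool" where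
  "has_binary_coproducts A S i1 i2 \<longleftrightarrow>
     (\<forall>X \<in> Obj A. \<forall>Y \<in> Obj A.
        S X Y \<in> Obj A \<and> i1 X Y \<in> hom A X (S X Y) \<and> i2 X Y \<in> hom A Y (S X Y) \<and>
        (\<forall>Z \<in> Obj A. \<forall>f \<in> hom A X Z. \<forall>g \<in> hom A Y Z.
           (\<exists>!h. h \<in> hom A (S X Y) Z \<and> Comp A h (i1 X Y) = f \<and> Comp A h (i2 X Y) = g)))"

definition cotuple ::
  "('o, 'm) category \<Rightarrow> ('o \<Rightarrow> 'o \<Rightarrow> 'o) \<Rightarrow> ('o \<Rightarrow> 'o \<Rightarrow> 'm) \<Rightarrow> ('o \<Rightarrow> 'o \<Rightarrow> 'm) \<Rightarrow> 'm \<Rightarrow> 'm \<Rightarrow> 'm" where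
  "cotuple A S i1 i2 f g =
     (THE h. h \<in> hom A (S (Dom A f) (Dom A g)) (Cod A f) \<and>
             Comp A h (i1 (Dom A f) (Dom A g)) = f \<and> Comp A h (i2 (Dom A f) (Dom A g)) = g)"

definition coprod_arr ::
  "('o, 'm) category \<Rightarrow> ('o \<Rightarrow> 'o \<Rightarrow> 'o) \<Rightarrow> ('o \<Rightarrow> 'o \<Rightarrow> 'm) \<Rightarrow> ('o \<Rightarrow> 'o \<Rightarrow> 'm) \<Rightarrow> 'm \<Rightarrow> 'm \<Rightarrow> 'm" where
  "coprod_arr A S i1 i2 f g =
     cotuple A S i1 i2 (Comp A (i1 (Cod A f) (Cod A g)) f) (Comp A (i2 (Cod A f) (Cod A g)) g)"

definition is_terminal_coalgebra ::
  "('o, 'm) category \<Rightarrow> ('o, 'm) endofunctor \<Rightarrow> 'o \<Rightarrow> 'm \<Rightarrow> bool" where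
  "is_terminal_coalgebra A H C c \<longleftrightarrow>
     C \<in> Obj A \<and> c \<in> hom A C (FObj H C) \<and>
     (\<forall>X \<in> Obj A. \<forall>e \<in> hom A X (FObj H X).
        (\<exists>!h. h \<in> hom A X C \<and> Comp A c h = Comp A (FArr H h) e))"

text \<open>Inverse of a morphism (used for c^-1; c is an isomorphism by Lambek's lemma).\<close>
definition inverse_arr :: "('o, 'm) category \<Rightarrow> 'm \<Rightarrow> 'm" where
  "inverse_arr A f =
     (THE g. g \<in> hom A (Cod A f) (Dom A f) \<and>
             Comp A g f = Ide A (Dom A f) \<and> Comp A f g = Ide A (Cod A f))"

definition has_free_algebras ::
  "('o, 'm) category \<Rightarrow> ('o, 'm) endofunctor \<Rightarrow> ('o \<Rightarrow> 'o) \<Rightarrow> ('o \<Rightarrow> 'm) \<Rightarrow> ('o \<Rightarrow> 'm) \<Rightarrow> bool" where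
  "has_free_algebras A K M phi eta \<longleftrightarrow>
     (\<forall>X \<in> Obj A.
        M X \<in> Obj A \<and> phi X \<in> hom A (FObj K (M X)) (M X) \<and> eta X \<in> hom A X (M X) \<and>
        (\<forall>B \<in> Obj A. \<forall>a \<in> hom A (FObj K B) B. \<forall>f \<in> hom A X B.
           (\<exists>!h. h \<in> hom A (M X) B \<and> Comp A h (phi X) = Comp A a (FArr K h) \<and>
                 Comp A h (eta X) = f)))"

definition free_arr ::
  "('o, 'm) category \<Rightarrow> ('o, 'm) endofunctor \<Rightarrow> ('o \<Rightarrow> 'o) \<Rightarrow> ('o \<Rightarrow> 'm) \<Rightarrow> ('o \<Rightarrow> 'm) \<Rightarrow> 'm \<Rightarrow> 'm" where
  "free_arr A K M phi eta f =
     (THE h. h \<in> hom A (M (Dom A f)) (M (Cod A f)) \<and>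
             Comp A h (phi (Dom A f)) = Comp A (phi (Cod A f)) (FArr K h) \<and>
             Comp A h (eta (Dom A f)) = Comp A (eta (Cod A f)) f)"

definition sharp ::
  "('o, 'm) category \<Rightarrow> ('o, 'm) endofunctor \<Rightarrow> ('o \<Rightarrow> 'o) \<Rightarrow> ('o \<Rightarrow> 'm) \<Rightarrow> ('o \<Rightarrow> 'm) \<Rightarrow> 'm \<Rightarrow> 'm" where
  "sharp A K M phi eta a =
     (THE h. h \<in> hom A (M (Cod A a)) (Cod A a) \<and>
             Comp A h (phi (Cod A a)) = Comp A a (FArr K h) \<and>
             Comp A h (eta (Cod A a)) = Ide A (Cod A a))"

definition HM_functor ::
  "('o, 'm) category \<Rightarrow> ('o, 'm) endofunctor \<Rightarrow> ('o, 'm) endofunctor \<Rightarrow> ('o \<Rightarrow> 'o) \<Rightarrow> ('o \<Rightarrow> 'm) \<Rightarrow> ('o \<Rightarrow> 'm)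
   \<Rightarrow> ('o, 'm) endofunctor" where
  "HM_functor A H K M phi eta =
     \<lparr> FObj = (\<lambda>X. FObj H (M X)), FArr = (\<lambda>f. FArr H (free_arr A K M phi eta f)) \<rparr>"

definition is_GSOS_rule ::
  "('o, 'm) category \<Rightarrow> ('o \<Rightarrow> 'o \<Rightarrow> 'o) \<Rightarrow> ('o \<Rightarrow> 'o \<Rightarrow> 'm) \<Rightarrow> ('o \<Rightarrow> 'o \<Rightarrow> 'm)
   \<Rightarrow> ('o, 'm) endofunctor \<Rightarrow> ('o, 'm) endofunctor \<Rightarrow> ('o \<Rightarrow> 'o) \<Rightarrow> ('o \<Rightarrow> 'm) \<Rightarrow> ('o \<Rightarrow> 'm)
   \<Rightarrow> ('o \<Rightarrow> 'm) \<Rightarrow> bool" where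
  "is_GSOS_rule A P p1 p2 H K M phi eta l \<longleftrightarrow>
     (\<forall>X \<in> Obj A. l X \<in> hom A (FObj K (P (FObj H X) X)) (FObj H (M X))) \<and>
     (\<forall>X \<in> Obj A. \<forall>Y \<in> Obj A. \<forall>f \<in> hom A X Y.
        Comp A (FArr H (free_arr A K M phi eta f)) (l X) =
        Comp A (l Y) (FArr K (prod_arr A P p1 p2 (FArr H f) f)))"

definition is_l_interpretation ::
  "('o, 'm) category \<Rightarrow> ('o \<Rightarrow> 'o \<Rightarrow> 'o) \<Rightarrow> ('o \<Rightarrow> 'o \<Rightarrow> 'm) \<Rightarrow> ('o \<Rightarrow> 'o \<Rightarrow> 'm)
   \<Rightarrow> ('o, 'm) endofunctor \<Rightarrow> ('o, 'm) endofunctor \<Rightarrow> ('o \<Rightarrow> 'o) \<Rightarrow> ('o \<Rightarrow> 'm) \<Rightarrow> ('o \<Rightarrow> 'm)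
   \<Rightarrow> ('o \<Rightarrow> 'm) \<Rightarrow> 'o \<Rightarrow> 'm \<Rightarrow> 'm \<Rightarrow> bool" where
  "is_l_interpretation A P p1 p2 H K M phi eta l C c b \<longleftrightarrow>
     b \<in> hom A (FObj K C) C \<and>
     (\<forall>b' \<in> hom A (FObj K C) C.
        Comp A c b' =
        Comp A (FArr H (sharp A K M phi eta b'))
          (Comp A (l C) (FArr K (tuple A P p1 p2 c (Ide A C))))
        \<longleftrightarrow> b' = b)"

definition is_cia ::
  "('o, 'm) category \<Rightarrow> ('o \<Rightarrow> 'o \<Rightarrow> 'o) \<Rightarrow> ('o \<Rightarrow> 'o \<Rightarrow> 'm) \<Rightarrow> ('o \<Rightarrow> 'o \<Rightarrow> 'm)
   \<Rightarrow> ('o, 'm) endofunctor \<Rightarrow> 'o \<Rightarrow> 'm \<Rightarrow> bool" where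
  "is_cia A S i1 i2 G B a \<longleftrightarrow>
     B \<in> Obj A \<and> a \<in> hom A (FObj G B) B \<and>
     (\<forall>X \<in> Obj A. \<forall>e \<in> hom A X (S (FObj G X) B).
        (\<exists>!s. s \<in> hom A X B \<and>
              s = Comp A (cotuple A S i1 i2 a (Ide A B))
                    (Comp A (coprod_arr A S i1 i2 (FArr G s) (Ide A B)) e)))"

end

theory Submission
  imports Defs
begin

locale gs =
  fixes Ac :: "('o, 'm) category"
    and P :: "'o \<Rightarrow> 'o \<Rightarrow> 'o" and p1 p2 :: "'o \<Rightarrow> 'o \<Rightarrow> 'm"
    and S :: "'o \<Rightarrow> 'o \<Rightarrow> 'o" and i1 i2 :: "'o \<Rightarrow> 'o \<Rightarrow> 'm"
    and H K :: "('o, 'm) endofunctor"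
    and C :: 'o and c :: 'm
    and M :: "'o \<Rightarrow> 'o" and phi eta :: "'o \<Rightarrow> 'm"
    and l :: "'o \<Rightarrow> 'm" and b :: 'm
  assumes cat: "is_category Ac"
    and prods: "has_binary_products Ac P p1 p2"
    and coprods: "has_binary_coproducts Ac S i1 i2"
    and endoH: "is_endofunctor Ac H"
    and endoK: "is_endofunctor Ac K"
    and termC: "is_terminal_coalgebra Ac H C c"
    and free: "has_free_algebras Ac K M phi eta"
    and gsos: "is_GSOS_rule Ac P p1 p2 H K M phi eta l"
    and interp: "is_l_interpretation Ac P p1 p2 H K M phi eta l C c b"
begin

abbreviation cmp (infixr "\<cdot>" 55) where "g \<cdot> f \<equiv> Comp Ac g f"
abbreviation "Ar f \<equiv> f \<in> Arr Ac"
abbreviation "Ob X \<equiv> X \<in> Obj Ac"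
abbreviation "dm \<equiv> Dom Ac"
abbreviation "cd \<equiv> Cod Ac"
abbreviation "ide \<equiv> Ide Ac"

lemma hom_iff: "f \<in> hom Ac X Y \<longleftrightarrow> Ar f \<and> dm f = X \<and> cd f = Y" by (simp add: hom_def)

lemma dom_obj[simp]: "Ar f \<Longrightarrow> Ob (dm f)" using cat by (simp add: is_category_def)
lemma cod_obj[simp]: "Ar f \<Longrightarrow> Ob (cd f)" using cat by (simp add: is_category_def)
lemma ide_hom: "Ob X \<Longrightarrow> ide X \<in> hom Ac X X" using cat by (simp add: is_category_def)
lemma ide_arr[simp]: "Ob X \<Longrightarrow> Ar (ide X)" using ide_hom hom_iff by blast
lemma ide_dom[simp]: "Ob X \<Longrightarrow> dm (ide X) = X" using ide_hom hom_iff by blast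
lemma ide_cod[simp]: "Ob X \<Longrightarrow> cd (ide X) = X" using ide_hom hom_iff by blast

lemma comp_hom: "Ar f \<Longrightarrow> Ar g \<Longrightarrow> cd f = dm g \<Longrightarrow> g \<cdot> f \<in> hom Ac (dm f) (cd g)"
proof -
  assume a: "Ar f" "Ar g" "cd f = dm g"
  have "\<forall>X \<in> Obj Ac. \<forall>Y \<in> Obj Ac. \<forall>Z \<in> Obj Ac. \<forall>f \<in> hom Ac X Y. \<forall>g \<in> hom Ac Y Z.
        Comp Ac g f \<in> hom Ac X Z" using cat by (simp add: is_category_def)
  moreover have "f \<in> hom Ac (dm f) (cd f)" "g \<in> hom Ac (cd f) (cd g)" using a by (auto simp: hom_iff)
  moreover have "Ob (dm f)" "Ob (cd f)" "Ob (cd g)" using a by auto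
  ultimately show ?thesis by blast
qed
lemma comp_arr[simp]: "Ar f \<Longrightarrow> Ar g \<Longrightarrow> cd f = dm g \<Longrightarrow> Ar (g \<cdot> f)" using comp_hom hom_iff by blast
lemma comp_dom[simp]: "Ar f \<Longrightarrow> Ar g \<Longrightarrow> cd f = dm g \<Longrightarrow> dm (g \<cdot> f) = dm f" using comp_hom hom_iff by blast
lemma comp_cod[simp]: "Ar f \<Longrightarrow> Ar g \<Longrightarrow> cd f = dm g \<Longrightarrow> cd (g \<cdot> f) = cd g" using comp_hom hom_iff by blast
lemma comp_ide_r[simp]: "Ar f \<Longrightarrow> dm f = X \<Longrightarrow> f \<cdot> ide X = f" using cat by (auto simp: is_category_def)
lemma comp_ide_l[simp]: "Ar f \<Longrightarrow> cd f = X \<Longrightarrow> ide X \<cdot> f = f" using cat by (auto simp: is_category_def)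
lemma assoc[simp]: "Ar f \<Longrightarrow> Ar g \<Longrightarrow> Ar h \<Longrightarrow> cd f = dm g \<Longrightarrow> cd g = dm h \<Longrightarrow> (h \<cdot> g) \<cdot> f = h \<cdot> g \<cdot> f"
  using cat unfolding is_category_def by metis

lemma F_obj: "is_endofunctor Ac F \<Longrightarrow> Ob X \<Longrightarrow> Ob (FObj F X)" by (simp add: is_endofunctor_def)
lemma F_hom: "is_endofunctor Ac F \<Longrightarrow> Ar f \<Longrightarrow> FArr F f \<in> hom Ac (FObj F (dm f)) (FObj F (cd f))"
proof -
  assume a: "is_endofunctor Ac F" "Ar f"
  then have "\<forall>X \<in> Obj Ac. \<forall>Y \<in> Obj Ac. \<forall>f \<in> hom Ac X Y. FArr F f \<in> hom Ac (FObj F X) (FObj F Y)"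
    by (simp add: is_endofunctor_def)
  moreover have "f \<in> hom Ac (dm f) (cd f)" using a by (auto simp: hom_iff)
  ultimately show ?thesis using a by simp
qed
lemma F_arr: "is_endofunctor Ac F \<Longrightarrow> Ar f \<Longrightarrow> Ar (FArr F f)" using F_hom hom_iff by blast
lemma F_dom: "is_endofunctor Ac F \<Longrightarrow> Ar f \<Longrightarrow> dm (FArr F f) = FObj F (dm f)" using F_hom hom_iff by blast
lemma F_cod: "is_endofunctor Ac F \<Longrightarrow> Ar f \<Longrightarrow> cd (FArr F f) = FObj F (cd f)" using F_hom hom_iff by blast
lemma F_ide: "is_endofunctor Ac F \<Longrightarrow> Ob X \<Longrightarrow> FArr F (ide X) = ide (FObj F X)" by (simp add: is_endofunctor_def)
lemma F_comp: "is_endofunctor Ac F \<Longrightarrow> Ar f \<Longrightarrow> Ar g \<Longrightarrow> cd f = dm g \<Longrightarrow> FArr F (g \<cdot> f) = FArr F g \<cdot> FArr F f"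
  by (simp add: is_endofunctor_def)

lemmas H_simps[simp] = F_obj[OF endoH] F_arr[OF endoH] F_dom[OF endoH] F_cod[OF endoH] F_ide[OF endoH] F_comp[OF endoH]
lemmas K_simps[simp] = F_obj[OF endoK] F_arr[OF endoK] F_dom[OF endoK] F_cod[OF endoK] F_ide[OF endoK] F_comp[OF endoK]

abbreviation "HA \<equiv> FArr H"
abbreviation "HO \<equiv> FObj H"
abbreviation "KA \<equiv> FArr K"
abbreviation "KO \<equiv> FObj K"
abbreviation "tup \<equiv> tuple Ac P p1 p2"
abbreviation "cotup \<equiv> cotuple Ac S i1 i2"

lemma prod_facts: "Ob X \<Longrightarrow> Ob Y \<Longrightarrow> Ob (P X Y) \<and> p1 X Y \<in> hom Ac (P X Y) X \<and> p2 X Y \<in> hom Ac (P X Y) Y \<and>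
  (\<forall>Z\<in>Obj Ac. \<forall>f\<in>hom Ac Z X. \<forall>g\<in>hom Ac Z Y. \<exists>!h. h \<in> hom Ac Z (P X Y) \<and> p1 X Y \<cdot> h = f \<and> p2 X Y \<cdot> h = g)"
  using prods by (simp add: has_binary_products_def)
lemma P_obj[simp]: "Ob X \<Longrightarrow> Ob Y \<Longrightarrow> Ob (P X Y)" using prod_facts by blast
lemma p1_arr[simp]: "Ob X \<Longrightarrow> Ob Y \<Longrightarrow> Ar (p1 X Y)" using prod_facts hom_iff by blast
lemma p1_dom[simp]: "Ob X \<Longrightarrow> Ob Y \<Longrightarrow> dm (p1 X Y) = P X Y" using prod_facts hom_iff by blast
lemma p1_cod[simp]: "Ob X \<Longrightarrow> Ob Y \<Longrightarrow> cd (p1 X Y) = X" using prod_facts hom_iff by blast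
lemma p2_arr[simp]: "Ob X \<Longrightarrow> Ob Y \<Longrightarrow> Ar (p2 X Y)" using prod_facts hom_iff by blast
lemma p2_dom[simp]: "Ob X \<Longrightarrow> Ob Y \<Longrightarrow> dm (p2 X Y) = P X Y" using prod_facts hom_iff by blast
lemma p2_cod[simp]: "Ob X \<Longrightarrow> Ob Y \<Longrightarrow> cd (p2 X Y) = Y" using prod_facts hom_iff by blast

lemma tup_ex1: assumes "Ar f" "Ar g" "dm f = dm g"
  shows "\<exists>!h. h \<in> hom Ac (dm f) (P (cd f) (cd g)) \<and> p1 (cd f) (cd g) \<cdot> h = f \<and> p2 (cd f) (cd g) \<cdot> h = g"
proof -
  have "\<forall>Z\<in>Obj Ac. \<forall>f'\<in>hom Ac Z (cd f). \<forall>g'\<in>hom Ac Z (cd g). \<exists>!h. h \<in> hom Ac Z (P (cd f) (cd g)) \<and> p1 (cd f) (cd g) \<cdot> h = f' \<and> p2 (cd f) (cd g) \<cdot> h = g'"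
    using prod_facts[of "cd f" "cd g"] assms by simp
  moreover have "f \<in> hom Ac (dm f) (cd f)" "g \<in> hom Ac (dm f) (cd g)" using assms by (auto simp: hom_iff)
  ultimately show ?thesis using assms by simp
qed

lemma tup_prop: assumes "Ar f" "Ar g" "dm f = dm g"
  shows "tup f g \<in> hom Ac (dm f) (P (cd f) (cd g)) \<and> p1 (cd f) (cd g) \<cdot> tup f g = f \<and> p2 (cd f) (cd g) \<cdot> tup f g = g"
  unfolding tuple_def by (rule theI'[OF tup_ex1[OF assms]])

lemma tup_arr[simp]: "Ar f \<Longrightarrow> Ar g \<Longrightarrow> dm f = dm g \<Longrightarrow> Ar (tup f g)" using tup_prop hom_iff by blast
lemma tup_dom[simp]: "Ar f \<Longrightarrow> Ar g \<Longrightarrow> dm f = dm g \<Longrightarrow> dm (tup f g) = dm f" using tup_prop hom_iff by blast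
lemma tup_cod[simp]: "Ar f \<Longrightarrow> Ar g \<Longrightarrow> dm f = dm g \<Longrightarrow> cd (tup f g) = P (cd f) (cd g)" using tup_prop hom_iff by blast
lemma tup_p1[simp]: "Ar f \<Longrightarrow> Ar g \<Longrightarrow> dm f = dm g \<Longrightarrow> cd f = X \<Longrightarrow> cd g = Y \<Longrightarrow> p1 X Y \<cdot> tup f g = f" using tup_prop by blast
lemma tup_p2[simp]: "Ar f \<Longrightarrow> Ar g \<Longrightarrow> dm f = dm g \<Longrightarrow> cd f = X \<Longrightarrow> cd g = Y \<Longrightarrow> p2 X Y \<cdot> tup f g = g" using tup_prop by blast

lemma tup_unique: assumes "Ar f" "Ar g" "dm f = dm g" "Ar h" "dm h = dm f" "cd h = P (cd f) (cd g)"
  "p1 (cd f) (cd g) \<cdot> h = f" "p2 (cd f) (cd g) \<cdot> h = g" shows "h = tup f g"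
  using tup_ex1[OF assms(1-3)] tup_prop[OF assms(1-3)] assms(4-) by (auto simp: hom_iff)

lemma tup_comp[simp]: assumes "Ar f" "Ar g" "dm f = dm g" "Ar x" "cd x = dm f"
  shows "tup f g \<cdot> x = tup (f \<cdot> x) (g \<cdot> x)"
proof (rule tup_unique)
  have "p1 (cd f) (cd g) \<cdot> (tup f g \<cdot> x) = (p1 (cd f) (cd g) \<cdot> tup f g) \<cdot> x" by (rule assoc[symmetric]) (use assms in auto)
  then show "p1 (cd (f \<cdot> x)) (cd (g \<cdot> x)) \<cdot> (tup f g \<cdot> x) = f \<cdot> x" using assms by simp
  have "p2 (cd f) (cd g) \<cdot> (tup f g \<cdot> x) = (p2 (cd f) (cd g) \<cdot> tup f g) \<cdot> x" by (rule assoc[symmetric]) (use assms in auto)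
  then show "p2 (cd (f \<cdot> x)) (cd (g \<cdot> x)) \<cdot> (tup f g \<cdot> x) = g \<cdot> x" using assms by simp
qed (use assms in auto)

lemma tup_ext: assumes "Ar h" "Ar k" "dm h = dm k" "cd h = P X Y" "cd k = P X Y" "Ob X" "Ob Y"
  "p1 X Y \<cdot> h = p1 X Y \<cdot> k" "p2 X Y \<cdot> h = p2 X Y \<cdot> k" shows "h = k"
proof -
  have "h = tup (p1 X Y \<cdot> h) (p2 X Y \<cdot> h)" by (rule tup_unique) (use assms in auto)
  moreover have "k = tup (p1 X Y \<cdot> k) (p2 X Y \<cdot> k)" by (rule tup_unique) (use assms in auto)
  ultimately show ?thesis using assms by simp
qed

lemma tup_eq_D: assumes "Ar f" "Ar g" "dm f = dm g" "Ar f'" "Ar g'" "dm f' = dm g'" "cd f = cd f'" "cd g = cd g'"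
  "tup f g = tup f' g'" shows "f = f' \<and> g = g'"
  by (metis assms tup_p1 tup_p2)

lemma prod_arr_tup[simp]: "Ar u \<Longrightarrow> Ar v \<Longrightarrow> Ar f \<Longrightarrow> Ar g \<Longrightarrow> dm f = dm g \<Longrightarrow> cd f = dm u \<Longrightarrow> cd g = dm v \<Longrightarrow>
  prod_arr Ac P p1 p2 u v \<cdot> tup f g = tup (u \<cdot> f) (v \<cdot> g)"
  unfolding prod_arr_def by simp

lemma coprod_facts: "Ob X \<Longrightarrow> Ob Y \<Longrightarrow> Ob (S X Y) \<and> i1 X Y \<in> hom Ac X (S X Y) \<and> i2 X Y \<in> hom Ac Y (S X Y) \<and>
  (\<forall>Z\<in>Obj Ac. \<forall>f\<in>hom Ac X Z. \<forall>g\<in>hom Ac Y Z. \<exists>!h. h \<in> hom Ac (S X Y) Z \<and> h \<cdot> i1 X Y = f \<and> h \<cdot> i2 X Y = g)"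
  using coprods by (simp add: has_binary_coproducts_def)
lemma S_obj[simp]: "Ob X \<Longrightarrow> Ob Y \<Longrightarrow> Ob (S X Y)" using coprod_facts by blast
lemma i1_arr[simp]: "Ob X \<Longrightarrow> Ob Y \<Longrightarrow> Ar (i1 X Y)" using coprod_facts hom_iff by blast
lemma i1_dom[simp]: "Ob X \<Longrightarrow> Ob Y \<Longrightarrow> dm (i1 X Y) = X" using coprod_facts hom_iff by blast
lemma i1_cod[simp]: "Ob X \<Longrightarrow> Ob Y \<Longrightarrow> cd (i1 X Y) = S X Y" using coprod_facts hom_iff by blast
lemma i2_arr[simp]: "Ob X \<Longrightarrow> Ob Y \<Longrightarrow> Ar (i2 X Y)" using coprod_facts hom_iff by blast
lemma i2_dom[simp]: "Ob X \<Longrightarrow> Ob Y \<Longrightarrow> dm (i2 X Y) = Y" using coprod_facts hom_iff by blast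
lemma i2_cod[simp]: "Ob X \<Longrightarrow> Ob Y \<Longrightarrow> cd (i2 X Y) = S X Y" using coprod_facts hom_iff by blast

lemma cotup_ex1: assumes "Ar f" "Ar g" "cd f = cd g"
  shows "\<exists>!h. h \<in> hom Ac (S (dm f) (dm g)) (cd f) \<and> h \<cdot> i1 (dm f) (dm g) = f \<and> h \<cdot> i2 (dm f) (dm g) = g"
proof -
  have "\<forall>Z\<in>Obj Ac. \<forall>f'\<in>hom Ac (dm f) Z. \<forall>g'\<in>hom Ac (dm g) Z. \<exists>!h. h \<in> hom Ac (S (dm f) (dm g)) Z \<and> h \<cdot> i1 (dm f) (dm g) = f' \<and> h \<cdot> i2 (dm f) (dm g) = g'"
    using coprod_facts[of "dm f" "dm g"] assms by simp
  moreover have "f \<in> hom Ac (dm f) (cd f)" "g \<in> hom Ac (dm g) (cd f)" using assms by (auto simp: hom_iff)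
  ultimately show ?thesis using assms by simp
qed

lemma cotup_prop: assumes "Ar f" "Ar g" "cd f = cd g"
  shows "cotup f g \<in> hom Ac (S (dm f) (dm g)) (cd f) \<and> cotup f g \<cdot> i1 (dm f) (dm g) = f \<and> cotup f g \<cdot> i2 (dm f) (dm g) = g"
  unfolding cotuple_def by (rule theI'[OF cotup_ex1[OF assms]])

lemma cotup_arr[simp]: "Ar f \<Longrightarrow> Ar g \<Longrightarrow> cd f = cd g \<Longrightarrow> Ar (cotup f g)" using cotup_prop hom_iff by blast
lemma cotup_dom[simp]: "Ar f \<Longrightarrow> Ar g \<Longrightarrow> cd f = cd g \<Longrightarrow> dm (cotup f g) = S (dm f) (dm g)" using cotup_prop hom_iff by blast
lemma cotup_cod[simp]: "Ar f \<Longrightarrow> Ar g \<Longrightarrow> cd f = cd g \<Longrightarrow> cd (cotup f g) = cd f" using cotup_prop hom_iff by blast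
lemma cotup_i1[simp]: "Ar f \<Longrightarrow> Ar g \<Longrightarrow> cd f = cd g \<Longrightarrow> dm f = X \<Longrightarrow> dm g = Y \<Longrightarrow> cotup f g \<cdot> i1 X Y = f" using cotup_prop by blast
lemma cotup_i2[simp]: "Ar f \<Longrightarrow> Ar g \<Longrightarrow> cd f = cd g \<Longrightarrow> dm f = X \<Longrightarrow> dm g = Y \<Longrightarrow> cotup f g \<cdot> i2 X Y = g" using cotup_prop by blast
lemma cotup_i1x[simp]: "Ar f \<Longrightarrow> Ar g \<Longrightarrow> cd f = cd g \<Longrightarrow> dm f = X \<Longrightarrow> dm g = Y \<Longrightarrow> Ar x \<Longrightarrow> cd x = X \<Longrightarrow> cotup f g \<cdot> i1 X Y \<cdot> x = f \<cdot> x"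
  by (metis assoc cotup_i1 cotup_arr cotup_dom i1_arr i1_cod i1_dom dom_obj)
lemma cotup_i2x[simp]: "Ar f \<Longrightarrow> Ar g \<Longrightarrow> cd f = cd g \<Longrightarrow> dm f = X \<Longrightarrow> dm g = Y \<Longrightarrow> Ar x \<Longrightarrow> cd x = Y \<Longrightarrow> cotup f g \<cdot> i2 X Y \<cdot> x = g \<cdot> x"
  by (metis assoc cotup_i2 cotup_arr cotup_dom i2_arr i2_cod i2_dom dom_obj)

lemma cotup_unique: assumes "Ar f" "Ar g" "cd f = cd g" "Ar h" "cd h = cd f" "dm h = S (dm f) (dm g)"
  "h \<cdot> i1 (dm f) (dm g) = f" "h \<cdot> i2 (dm f) (dm g) = g" shows "h = cotup f g"
  using cotup_ex1[OF assms(1-3)] cotup_prop[OF assms(1-3)] assms(4-) by (auto simp: hom_iff)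

lemma comp_cotup[simp]: assumes "Ar f" "Ar g" "cd f = cd g" "Ar x" "dm x = cd f"
  shows "x \<cdot> cotup f g = cotup (x \<cdot> f) (x \<cdot> g)"
proof (rule cotup_unique)
  have "(x \<cdot> cotup f g) \<cdot> i1 (dm f) (dm g) = x \<cdot> (cotup f g \<cdot> i1 (dm f) (dm g))" using assms by simp
  then show "(x \<cdot> cotup f g) \<cdot> i1 (dm (x \<cdot> f)) (dm (x \<cdot> g)) = x \<cdot> f" using assms by simp
  have "(x \<cdot> cotup f g) \<cdot> i2 (dm f) (dm g) = x \<cdot> (cotup f g \<cdot> i2 (dm f) (dm g))" using assms by simp
  then show "(x \<cdot> cotup f g) \<cdot> i2 (dm (x \<cdot> f)) (dm (x \<cdot> g)) = x \<cdot> g" using assms by simp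
qed (use assms in auto)

lemma comp_cotupx[simp]: assumes "Ar f" "Ar g" "cd f = cd g" "Ar x" "dm x = cd f" "Ar y" "cd y = S (dm f) (dm g)"
  shows "x \<cdot> cotup f g \<cdot> y = cotup (x \<cdot> f) (x \<cdot> g) \<cdot> y"
proof -
  have "x \<cdot> cotup f g \<cdot> y = (x \<cdot> cotup f g) \<cdot> y" by (rule assoc[symmetric]) (use assms in auto)
  then show ?thesis using assms by simp
qed

lemma cotup_ext: assumes "Ar h" "Ar k" "cd h = cd k" "dm h = S X Y" "dm k = S X Y" "Ob X" "Ob Y"
  "h \<cdot> i1 X Y = k \<cdot> i1 X Y" "h \<cdot> i2 X Y = k \<cdot> i2 X Y" shows "h = k"
proof -
  have "h = cotup (h \<cdot> i1 X Y) (h \<cdot> i2 X Y)" by (rule cotup_unique) (use assms in auto)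
  moreover have "k = cotup (k \<cdot> i1 X Y) (k \<cdot> i2 X Y)" by (rule cotup_unique) (use assms in auto)
  ultimately show ?thesis using assms by simp
qed

section \<open>terminal coalgebra\<close>

lemma term_facts: "Ob C \<and> c \<in> hom Ac C (HO C) \<and> (\<forall>X\<in>Obj Ac. \<forall>e\<in>hom Ac X (HO X). \<exists>!h. h \<in> hom Ac X C \<and> c \<cdot> h = HA h \<cdot> e)"
  using termC by (simp add: is_terminal_coalgebra_def)
lemma C_obj[simp]: "Ob C" using term_facts by blast
lemma c_arr[simp]: "Ar c" using term_facts hom_iff by blast
lemma c_dom[simp]: "dm c = C" using term_facts hom_iff by blast
lemma c_cod[simp]: "cd c = HO C" using term_facts hom_iff by blast

lemma coalg_ex1: assumes "Ob X" "Ar d" "dm d = X" "cd d = HO X"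
  shows "\<exists>!h. h \<in> hom Ac X C \<and> c \<cdot> h = HA h \<cdot> d"
proof -
  have d: "d \<in> hom Ac X (HO X)" using assms by (simp add: hom_iff)
  have "\<forall>X\<in>Obj Ac. \<forall>e\<in>hom Ac X (HO X). \<exists>!h. h \<in> hom Ac X C \<and> c \<cdot> h = HA h \<cdot> e"
    using term_facts by (rule conjunct2[OF conjunct2])
  from bspec[OF bspec[OF this assms(1)] d] show ?thesis .
qed

lemma coind: assumes "Ar d" "dm d = X" "cd d = HO X" "Ar f" "dm f = X" "cd f = C" "Ar g" "dm g = X" "cd g = C"
  "c \<cdot> f = HA f \<cdot> d" "c \<cdot> g = HA g \<cdot> d" shows "f = g"
proof -
  have "Ob X" using assms by (metis dom_obj)
  from coalg_ex1[OF this assms(1-3)] show ?thesis using assms by (simp add: hom_iff) blast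
qed

lemma coalg_ex: assumes "Ar d" "dm d = X" "cd d = HO X"
  obtains h where "Ar h" "dm h = X" "cd h = C" "c \<cdot> h = HA h \<cdot> d"
proof -
  have "Ob X" using assms by (metis dom_obj)
  from ex1_implies_ex[OF coalg_ex1[OF this assms(1-3)]] show ?thesis using that by (auto simp: hom_iff)
qed

lemma lambek: obtains g where "Ar g" "dm g = HO C" "cd g = C" "g \<cdot> c = ide C" "c \<cdot> g = ide (HO C)"
proof -
  obtain g where g: "Ar g" "dm g = HO C" "cd g = C" "c \<cdot> g = HA g \<cdot> HA c"
    using coalg_ex[of "HA c" "HO C"] by auto
  have "c \<cdot> g \<cdot> c = (c \<cdot> g) \<cdot> c" by (rule assoc[symmetric]) (use g in auto)
  then have e1: "c \<cdot> (g \<cdot> c) = HA (g \<cdot> c) \<cdot> c" using g by simp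
  have "g \<cdot> c = ide C" by (rule coind[OF _ _ _ _ _ _ _ _ _ e1]) (use g in auto)
  moreover have "c \<cdot> g = HA (g \<cdot> c)" using g by simp
  ultimately show ?thesis using that g by simp
qed

definition "cinv = inverse_arr Ac c"

lemma cinv_prop: "Ar cinv \<and> dm cinv = HO C \<and> cd cinv = C \<and> cinv \<cdot> c = ide C \<and> c \<cdot> cinv = ide (HO C)"
proof -
  obtain g where g: "Ar g" "dm g = HO C" "cd g = C" "g \<cdot> c = ide C" "c \<cdot> g = ide (HO C)" using lambek by blast
  have "inverse_arr Ac c = g" unfolding inverse_arr_def
  proof (rule the_equality)
    show "g \<in> hom Ac (cd c) (dm c) \<and> g \<cdot> c = ide (dm c) \<and> c \<cdot> g = ide (cd c)" using g by (simp add: hom_iff)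
  next
    fix g' assume a: "g' \<in> hom Ac (cd c) (dm c) \<and> g' \<cdot> c = ide (dm c) \<and> c \<cdot> g' = ide (cd c)"
    then have "g' = g' \<cdot> (c \<cdot> g)" using g by (simp add: hom_iff)
    also have "\<dots> = (g' \<cdot> c) \<cdot> g" by (rule assoc[symmetric]) (use a g in \<open>auto simp: hom_iff\<close>)
    also have "\<dots> = g" using a g by simp
    finally show "g' = g" .
  qed
  then show ?thesis using g by (simp add: cinv_def)
qed
lemma cinv_arr[simp]: "Ar cinv" using cinv_prop by blast
lemma cinv_dom[simp]: "dm cinv = HO C" using cinv_prop by blast
lemma cinv_cod[simp]: "cd cinv = C" using cinv_prop by blast
lemma cinv_c[simp]: "cinv \<cdot> c = ide C" using cinv_prop by blast
lemma c_cinv[simp]: "c \<cdot> cinv = ide (HO C)" using cinv_prop by blast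
lemma c_cinvx[simp]: "Ar x \<Longrightarrow> cd x = HO C \<Longrightarrow> c \<cdot> cinv \<cdot> x = x"
  by (metis assoc c_cinv c_arr cinv_arr cinv_cod c_dom cinv_dom comp_ide_l)
lemma cinv_cx[simp]: "Ar x \<Longrightarrow> cd x = C \<Longrightarrow> cinv \<cdot> c \<cdot> x = x"
  by (metis assoc cinv_c c_arr cinv_arr cinv_dom c_cod c_dom comp_ide_l)

section \<open>free algebras\<close>

abbreviation "Mf \<equiv> free_arr Ac K M phi eta"
abbreviation "sh \<equiv> sharp Ac K M phi eta"
abbreviation "mu X \<equiv> sh (phi X)"

lemma free_facts: "Ob X \<Longrightarrow> Ob (M X) \<and> phi X \<in> hom Ac (KO (M X)) (M X) \<and> eta X \<in> hom Ac X (M X) \<and>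
  (\<forall>B\<in>Obj Ac. \<forall>a\<in>hom Ac (KO B) B. \<forall>f\<in>hom Ac X B. \<exists>!h. h \<in> hom Ac (M X) B \<and> h \<cdot> phi X = a \<cdot> KA h \<and> h \<cdot> eta X = f)"
  using free by (simp add: has_free_algebras_def)
lemma M_obj[simp]: "Ob X \<Longrightarrow> Ob (M X)" using free_facts by blast
lemma phi_arr[simp]: "Ob X \<Longrightarrow> Ar (phi X)" using free_facts hom_iff by blast
lemma phi_dom[simp]: "Ob X \<Longrightarrow> dm (phi X) = KO (M X)" using free_facts hom_iff by blast
lemma phi_cod[simp]: "Ob X \<Longrightarrow> cd (phi X) = M X" using free_facts hom_iff by blast
lemma eta_arr[simp]: "Ob X \<Longrightarrow> Ar (eta X)" using free_facts hom_iff by blast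
lemma eta_dom[simp]: "Ob X \<Longrightarrow> dm (eta X) = X" using free_facts hom_iff by blast
lemma eta_cod[simp]: "Ob X \<Longrightarrow> cd (eta X) = M X" using free_facts hom_iff by blast

lemma free_ex1: assumes "Ob X" "Ar a" "dm a = KO B" "cd a = B" "Ar f" "dm f = X" "cd f = B"
  shows "\<exists>!h. h \<in> hom Ac (M X) B \<and> h \<cdot> phi X = a \<cdot> KA h \<and> h \<cdot> eta X = f"
proof -
  have h: "a \<in> hom Ac (KO B) B" "f \<in> hom Ac X B" "Ob B" using assms by (auto simp: hom_iff)
  have "\<forall>B\<in>Obj Ac. \<forall>a\<in>hom Ac (KO B) B. \<forall>f\<in>hom Ac X B. \<exists>!h. h \<in> hom Ac (M X) B \<and> h \<cdot> phi X = a \<cdot> KA h \<and> h \<cdot> eta X = f"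
    using free_facts[OF assms(1)] by (rule conjunct2[OF conjunct2[OF conjunct2]])
  from bspec[OF bspec[OF bspec[OF this h(3)] h(1)] h(2)] show ?thesis .
qed

lemma free_uniq: assumes "Ob X" "Ar a" "dm a = KO B" "cd a = B"
  "Ar h1" "dm h1 = M X" "cd h1 = B" "Ar h2" "dm h2 = M X" "cd h2 = B"
  "h1 \<cdot> phi X = a \<cdot> KA h1" "h2 \<cdot> phi X = a \<cdot> KA h2" "h1 \<cdot> eta X = h2 \<cdot> eta X" shows "h1 = h2"
proof -
  have "Ar (h2 \<cdot> eta X)" "dm (h2 \<cdot> eta X) = X" "cd (h2 \<cdot> eta X) = B" using assms by auto
  from free_ex1[OF assms(1-4) this] show ?thesis using assms by (simp add: hom_iff) blast
qed

lemma Mf_prop: assumes "Ar f" shows "Mf f \<in> hom Ac (M (dm f)) (M (cd f)) \<and>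
  Mf f \<cdot> phi (dm f) = phi (cd f) \<cdot> KA (Mf f) \<and> Mf f \<cdot> eta (dm f) = eta (cd f) \<cdot> f"
  unfolding free_arr_def by (rule theI'[OF free_ex1]) (use assms in auto)

lemma Mf_arr[simp]: "Ar f \<Longrightarrow> Ar (Mf f)" using Mf_prop hom_iff by blast
lemma Mf_dom[simp]: "Ar f \<Longrightarrow> dm (Mf f) = M (dm f)" using Mf_prop hom_iff by blast
lemma Mf_cod[simp]: "Ar f \<Longrightarrow> cd (Mf f) = M (cd f)" using Mf_prop hom_iff by blast
lemma Mf_eta[simp]: "Ar f \<Longrightarrow> dm f = X \<Longrightarrow> Mf f \<cdot> eta X = eta (cd f) \<cdot> f" using Mf_prop by blast
lemma Mf_phi[simp]: "Ar f \<Longrightarrow> dm f = X \<Longrightarrow> Mf f \<cdot> phi X = phi (cd f) \<cdot> KA (Mf f)" using Mf_prop by blast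
lemma Mf_etax[simp]: "Ar f \<Longrightarrow> dm f = X \<Longrightarrow> Ar x \<Longrightarrow> cd x = X \<Longrightarrow> Mf f \<cdot> eta X \<cdot> x = eta (cd f) \<cdot> f \<cdot> x"
proof -
  assume a: "Ar f" "dm f = X" "Ar x" "cd x = X"
  have "Mf f \<cdot> eta X \<cdot> x = (Mf f \<cdot> eta X) \<cdot> x" by (rule assoc[symmetric]) (use a in auto)
  then show ?thesis using a by simp
qed
lemma Mf_phix[simp]: "Ar f \<Longrightarrow> dm f = X \<Longrightarrow> Ar x \<Longrightarrow> cd x = KO (M X) \<Longrightarrow> Mf f \<cdot> phi X \<cdot> x = phi (cd f) \<cdot> KA (Mf f) \<cdot> x"
proof -
  assume a: "Ar f" "dm f = X" "Ar x" "cd x = KO (M X)"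
  have "Mf f \<cdot> phi X \<cdot> x = (Mf f \<cdot> phi X) \<cdot> x" by (rule assoc[symmetric]) (use a in auto)
  then show ?thesis using a by simp
qed

lemma sh_prop: assumes "Ar a" "dm a = KO (cd a)" shows "sh a \<in> hom Ac (M (cd a)) (cd a) \<and>
  sh a \<cdot> phi (cd a) = a \<cdot> KA (sh a) \<and> sh a \<cdot> eta (cd a) = ide (cd a)"
  unfolding sharp_def by (rule theI'[OF free_ex1]) (use assms in auto)

lemma sh_arr[simp]: "Ar a \<Longrightarrow> dm a = KO (cd a) \<Longrightarrow> Ar (sh a)" using sh_prop hom_iff by blast
lemma sh_dom[simp]: "Ar a \<Longrightarrow> dm a = KO (cd a) \<Longrightarrow> dm (sh a) = M (cd a)" using sh_prop hom_iff by blast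
lemma sh_cod[simp]: "Ar a \<Longrightarrow> dm a = KO (cd a) \<Longrightarrow> cd (sh a) = cd a" using sh_prop hom_iff by blast
lemma sh_eta[simp]: "Ar a \<Longrightarrow> dm a = KO (cd a) \<Longrightarrow> cd a = B \<Longrightarrow> sh a \<cdot> eta B = ide B" using sh_prop by blast
lemma sh_phi[simp]: "Ar a \<Longrightarrow> dm a = KO (cd a) \<Longrightarrow> cd a = B \<Longrightarrow> sh a \<cdot> phi B = a \<cdot> KA (sh a)" using sh_prop by blast
lemma sh_etax[simp]: "Ar a \<Longrightarrow> dm a = KO (cd a) \<Longrightarrow> cd a = B \<Longrightarrow> Ar x \<Longrightarrow> cd x = B \<Longrightarrow> sh a \<cdot> eta B \<cdot> x = x"
proof -
  assume a: "Ar a" "dm a = KO (cd a)" "cd a = B" "Ar x" "cd x = B"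
  have "sh a \<cdot> eta B \<cdot> x = (sh a \<cdot> eta B) \<cdot> x" by (rule assoc[symmetric]) (use a in auto)
  then show ?thesis using a by simp
qed
lemma sh_phix[simp]: "Ar a \<Longrightarrow> dm a = KO (cd a) \<Longrightarrow> cd a = B \<Longrightarrow> Ar x \<Longrightarrow> cd x = KO (M B) \<Longrightarrow> sh a \<cdot> phi B \<cdot> x = a \<cdot> KA (sh a) \<cdot> x"
proof -
  assume a: "Ar a" "dm a = KO (cd a)" "cd a = B" "Ar x" "cd x = KO (M B)"
  have "sh a \<cdot> phi B \<cdot> x = (sh a \<cdot> phi B) \<cdot> x" by (rule assoc[symmetric]) (use a in auto)
  then show ?thesis using a by simp
qed

lemma ext_eqs: assumes "Ar a" "dm a = KO B" "cd a = B" "Ar f" "cd f = B" "dm f = Z"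
  shows "sh a \<cdot> Mf f \<cdot> phi Z = a \<cdot> KA (sh a) \<cdot> KA (Mf f)" "sh a \<cdot> Mf f \<cdot> eta Z = f"
  using assms by simp_all

lemma ext_unique: assumes "Ar a" "dm a = KO B" "cd a = B" "Ar f" "cd f = B" "dm f = Z"
  "Ar g" "dm g = M Z" "cd g = B" "g \<cdot> phi Z = a \<cdot> KA g" "g \<cdot> eta Z = f"
  shows "g = sh a \<cdot> Mf f"
proof -
  have "Ob Z" using assms by (metis dom_obj)
  then show ?thesis by (rule free_uniq[of Z a B]) (use assms `Ob Z` in simp_all)
qed

lemma Mf_comp[simp]: assumes "Ar f" "Ar g" "cd f = dm g" shows "Mf (g \<cdot> f) = Mf g \<cdot> Mf f"
  by (rule free_uniq[of "dm f" "phi (cd g)" "M (cd g)"]) (use assms in simp_all)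

lemma Mf_ide[simp]: assumes "Ob X" shows "Mf (ide X) = ide (M X)"
  by (rule free_uniq[of X "phi X" "M X"]) (use assms in simp_all)

lemma mu_arr[simp]: "Ob X \<Longrightarrow> Ar (mu X)" by simp
lemma mu_dom[simp]: "Ob X \<Longrightarrow> dm (mu X) = M (M X)" by simp
lemma mu_cod[simp]: "Ob X \<Longrightarrow> cd (mu X) = M X" by simp

lemma mu_Meta: assumes "Ob X" shows "mu X \<cdot> Mf (eta X) = ide (M X)"
  by (rule ext_unique[of "phi X" "M X" "eta X" X, symmetric]) (use assms in simp_all)

lemma mu_Metax: assumes "Ob X" "Ar x" "cd x = M X" shows "mu X \<cdot> Mf (eta X) \<cdot> x = x"
proof -
  have "mu X \<cdot> Mf (eta X) \<cdot> x = (mu X \<cdot> Mf (eta X)) \<cdot> x" by (rule assoc[symmetric]) (use assms in simp_all)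
  then show ?thesis using assms by (simp add: mu_Meta)
qed

lemma mu_assoc: assumes "Ob X" shows "mu X \<cdot> Mf (mu X) = mu X \<cdot> mu (M X)"
  by (rule ext_unique[of "phi X" "M X" "mu X" "M (M X)", symmetric]) (use assms in simp_all)

lemma ext_mu: assumes "Ar a" "dm a = KO B" "cd a = B" "Ar f" "cd f = B" "dm f = Z"
  shows "sh a \<cdot> Mf (sh a) \<cdot> Mf (Mf f) = sh a \<cdot> Mf f \<cdot> mu Z"
proof -
  have Z: "Ob Z" using assms by (metis dom_obj)
  have "sh a \<cdot> Mf (sh a \<cdot> Mf f) = (sh a \<cdot> Mf f) \<cdot> mu Z"
    by (rule ext_unique[of a B "sh a \<cdot> Mf f" "M Z", symmetric]) (use assms Z in simp_all)
  then show ?thesis using assms Z by simp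
qed

section \<open>GSOS\<close>

lemma gsos_facts: "(\<forall>X \<in> Obj Ac. l X \<in> hom Ac (KO (P (HO X) X)) (HO (M X))) \<and>
     (\<forall>X \<in> Obj Ac. \<forall>Y \<in> Obj Ac. \<forall>f \<in> hom Ac X Y.
        HA (Mf f) \<cdot> (l X) = l Y \<cdot> KA (prod_arr Ac P p1 p2 (HA f) f))"
  using gsos by (simp add: is_GSOS_rule_def)
lemma l_hom: "Ob X \<Longrightarrow> l X \<in> hom Ac (KO (P (HO X) X)) (HO (M X))" using gsos_facts by blast
lemma l_arr[simp]: "Ob X \<Longrightarrow> Ar (l X)" using l_hom hom_iff by blast
lemma l_dom[simp]: "Ob X \<Longrightarrow> dm (l X) = KO (P (HO X) X)" using l_hom hom_iff by blast
lemma l_cod[simp]: "Ob X \<Longrightarrow> cd (l X) = HO (M X)" using l_hom hom_iff by blast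
lemma l_nat: assumes "Ar f" shows "HA (Mf f) \<cdot> l (dm f) = l (cd f) \<cdot> KA (prod_arr Ac P p1 p2 (HA f) f)"
proof -
  have "\<forall>X \<in> Obj Ac. \<forall>Y \<in> Obj Ac. \<forall>f \<in> hom Ac X Y.
        HA (Mf f) \<cdot> (l X) = l Y \<cdot> KA (prod_arr Ac P p1 p2 (HA f) f)" using gsos_facts by (rule conjunct2)
  moreover have "f \<in> hom Ac (dm f) (cd f)" using assms by (simp add: hom_iff)
  ultimately show ?thesis using assms by simp
qed

lemma nat_tup: assumes "Ar f" "dm f = X" "cd f = Y" "Ar u" "Ar v" "dm u = dm v" "cd u = HO X" "cd v = X"
  shows "l Y \<cdot> KA (tup (HA f \<cdot> u) (f \<cdot> v)) = HA (Mf f) \<cdot> l X \<cdot> KA (tup u v)"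
proof -
  have XY: "Ob X" "Ob Y" using assms by (metis dom_obj, metis cod_obj)
  note assms = assms XY
  let ?pa = "prod_arr Ac P p1 p2 (HA f) f"
  have pa: "?pa = tup (HA f \<cdot> p1 (HO X) X) (f \<cdot> p2 (HO X) X)" using assms by (simp add: prod_arr_def)
  have pa_arr: "Ar ?pa" "dm ?pa = P (HO X) X" "cd ?pa = P (HO Y) Y" unfolding pa using assms by auto
  have "tup (HA f \<cdot> u) (f \<cdot> v) = ?pa \<cdot> tup u v" using assms by simp
  then have "KA (tup (HA f \<cdot> u) (f \<cdot> v)) = KA (?pa \<cdot> tup u v)" by (simp only:)
  also have "\<dots> = KA ?pa \<cdot> KA (tup u v)" by (rule F_comp[OF endoK]) (use assms pa_arr in simp_all)
  finally have "l Y \<cdot> KA (tup (HA f \<cdot> u) (f \<cdot> v)) = l Y \<cdot> KA ?pa \<cdot> KA (tup u v)" by simp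
  also have "\<dots> = (l Y \<cdot> KA ?pa) \<cdot> KA (tup u v)" by (rule assoc[symmetric]) (use assms pa_arr in simp_all)
  also have "\<dots> = (HA (Mf f) \<cdot> l X) \<cdot> KA (tup u v)" using l_nat[OF assms(1)] assms by simp
  also have "\<dots> = HA (Mf f) \<cdot> l X \<cdot> KA (tup u v)" using assms by simp
  finally show ?thesis .
qed

abbreviation "beta \<equiv> sh b"
lemma interp_facts: "b \<in> hom Ac (KO C) C \<and> c \<cdot> b = HA beta \<cdot> l C \<cdot> KA (tup c (ide C))"
proof -
  have h: "b \<in> hom Ac (KO C) C" using interp unfolding is_l_interpretation_def by (rule conjunct1)
  have "\<forall>b' \<in> hom Ac (KO C) C.
        c \<cdot> b' = HA (sh b') \<cdot> (l C \<cdot> KA (tup c (ide C))) \<longleftrightarrow> b' = b"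
    using interp unfolding is_l_interpretation_def by (rule conjunct2)
  from bspec[OF this h] h show ?thesis by (simp only: simp_thms)
qed
lemma b_arr[simp]: "Ar b" using conjunct1[OF interp_facts] by (simp add: hom_iff)
lemma b_dom[simp]: "dm b = KO C" using conjunct1[OF interp_facts] by (simp add: hom_iff)
lemma b_cod[simp]: "cd b = C" using conjunct1[OF interp_facts] by (simp add: hom_iff)
lemma c_b: "c \<cdot> b = HA beta \<cdot> l C \<cdot> KA (tup c (ide C))" by (rule conjunct2[OF interp_facts])

lemma KA_tup_comp[simp]: assumes "Ar u" "Ar v" "dm u = dm v" "Ar x" "cd x = dm u"
  shows "KA (tup u v) \<cdot> KA x = KA (tup (u \<cdot> x) (v \<cdot> x))"
proof -
  have "KA (tup u v \<cdot> x) = KA (tup u v) \<cdot> KA x" by (rule F_comp[OF endoK]) (use assms in auto)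
  then show ?thesis using assms by simp
qed
lemma KA_tup_compx[simp]: assumes "Ar u" "Ar v" "dm u = dm v" "Ar x" "cd x = dm u" "Ar y" "cd y = KO (dm x)"
  shows "KA (tup u v) \<cdot> KA x \<cdot> y = KA (tup (u \<cdot> x) (v \<cdot> x)) \<cdot> y"
proof -
  have "KA (tup u v) \<cdot> KA x \<cdot> y = (KA (tup u v) \<cdot> KA x) \<cdot> y" by (rule assoc[symmetric]) (use assms in auto)
  then show ?thesis using assms by simp
qed
lemma KA_p1_tup[simp]: assumes "Ar u" "Ar v" "dm u = dm v" "cd u = X" "cd v = Y"
  shows "KA (p1 X Y) \<cdot> KA (tup u v) = KA u"
proof -
  have "Ob X" "Ob Y" using assms by (metis cod_obj)+
  then have "KA (p1 X Y \<cdot> tup u v) = KA (p1 X Y) \<cdot> KA (tup u v)" by (intro F_comp[OF endoK]) (use assms in auto)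
  then show ?thesis using assms by simp
qed
lemma KA_p2_tup[simp]: assumes "Ar u" "Ar v" "dm u = dm v" "cd u = X" "cd v = Y"
  shows "KA (p2 X Y) \<cdot> KA (tup u v) = KA v"
proof -
  have "Ob X" "Ob Y" using assms by (metis cod_obj)+
  then have "KA (p2 X Y \<cdot> tup u v) = KA (p2 X Y) \<cdot> KA (tup u v)" by (intro F_comp[OF endoK]) (use assms in auto)
  then show ?thesis using assms by simp
qed
lemma KA_p2_tupx[simp]: assumes "Ar u" "Ar v" "dm u = dm v" "cd u = X" "cd v = Y" "Ar y" "cd y = KO (dm u)"
  shows "KA (p2 X Y) \<cdot> KA (tup u v) \<cdot> y = KA v \<cdot> y"
proof -
  have "Ob X" "Ob Y" using assms by (metis cod_obj)+
  then have "KA (p2 X Y) \<cdot> KA (tup u v) \<cdot> y = (KA (p2 X Y) \<cdot> KA (tup u v)) \<cdot> y" by (intro assoc[symmetric]) (use assms in auto)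
  then show ?thesis using assms by simp
qed

lemma c_bx[simp]: assumes "Ar x" "cd x = KO C" shows "c \<cdot> b \<cdot> x = HA beta \<cdot> l C \<cdot> KA (tup c (ide C)) \<cdot> x"
proof -
  have "c \<cdot> b \<cdot> x = (c \<cdot> b) \<cdot> x" by (rule assoc[symmetric]) (use assms in auto)
  also have "\<dots> = (HA beta \<cdot> l C \<cdot> KA (tup c (ide C))) \<cdot> x" by (simp only: c_b)
  also have "\<dots> = HA beta \<cdot> l C \<cdot> KA (tup c (ide C)) \<cdot> x" using assms by simp
  finally show ?thesis .
qed

section \<open>extension of d : Z -> H M Z to M Z\<close>

lemma ext_D: assumes Z: "Ob Z" and d: "Ar d" "dm d = Z" "cd d = HO (M Z)"
  obtains D where "Ar D" "dm D = M Z" "cd D = HO (M Z)" "D \<cdot> eta Z = d"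
    "D \<cdot> phi Z = HA (mu Z) \<cdot> l (M Z) \<cdot> KA (tup D (ide (M Z)))"
proof -
  let ?Q = "P (HO (M Z)) (M Z)"
  let ?p1 = "p1 (HO (M Z)) (M Z)" and ?p2 = "p2 (HO (M Z)) (M Z)"
  let ?alg = "tup (HA (mu Z) \<cdot> l (M Z)) (phi Z \<cdot> KA ?p2)"
  have alg: "Ar ?alg" "dm ?alg = KO ?Q" "cd ?alg = ?Q" using Z by auto
  have td: "Ar (tup d (eta Z))" "dm (tup d (eta Z)) = Z" "cd (tup d (eta Z)) = ?Q" using Z d by auto
  obtain E where E: "E \<in> hom Ac (M Z) ?Q" "E \<cdot> phi Z = ?alg \<cdot> KA E" "E \<cdot> eta Z = tup d (eta Z)"
    using ex1_implies_ex[OF free_ex1[OF Z alg td]] by blast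
  have Ea: "Ar E" "dm E = M Z" "cd E = ?Q" using E(1) by (auto simp: hom_iff)
  have "?p2 \<cdot> E = ide (M Z)"
  proof (rule free_uniq[of Z "phi Z" "M Z"])
    have "?p2 \<cdot> E \<cdot> phi Z = ?p2 \<cdot> ?alg \<cdot> KA E" using E(2) by simp
    also have "\<dots> = phi Z \<cdot> KA (?p2 \<cdot> E)" using Z Ea by simp
    finally show "(?p2 \<cdot> E) \<cdot> phi Z = phi Z \<cdot> KA (?p2 \<cdot> E)" using Z Ea by simp
    have "?p2 \<cdot> E \<cdot> eta Z = ?p2 \<cdot> tup d (eta Z)" using E(3) by simp
    then show "(?p2 \<cdot> E) \<cdot> eta Z = ide (M Z) \<cdot> eta Z" using Z Ea d by simp
  qed (use Z Ea in simp_all)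
  then have Et: "E = tup (?p1 \<cdot> E) (ide (M Z))"
    using tup_unique[of "?p1 \<cdot> E" "ide (M Z)" E] Z Ea by simp
  show ?thesis
  proof (rule that[of "?p1 \<cdot> E"])
    show "Ar (?p1 \<cdot> E)" "dm (?p1 \<cdot> E) = M Z" "cd (?p1 \<cdot> E) = HO (M Z)" using Z Ea by auto
    have "?p1 \<cdot> E \<cdot> eta Z = ?p1 \<cdot> tup d (eta Z)" using E(3) by simp
    then show "(?p1 \<cdot> E) \<cdot> eta Z = d" using Z Ea d by simp
    have "?p1 \<cdot> E \<cdot> phi Z = ?p1 \<cdot> ?alg \<cdot> KA E" using E(2) by simp
    also have "\<dots> = HA (mu Z) \<cdot> l (M Z) \<cdot> KA E" using Z Ea by simp
    also have "\<dots> = HA (mu Z) \<cdot> l (M Z) \<cdot> KA (tup (?p1 \<cdot> E) (ide (M Z)))" using Et by metis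
    finally show "(?p1 \<cdot> E) \<cdot> phi Z = HA (mu Z) \<cdot> l (M Z) \<cdot> KA (tup (?p1 \<cdot> E) (ide (M Z)))" using Z Ea by simp
  qed
qed

lemma beta_arr[simp]: "Ar beta" and beta_dom[simp]: "dm beta = M C" and beta_cod[simp]: "cd beta = C"
  by simp_all

lemma lemA: assumes Z: "Ob Z" and d: "Ar d" "dm d = Z" "cd d = HO (M Z)"
  and D: "Ar D" "dm D = M Z" "cd D = HO (M Z)" "D \<cdot> eta Z = d"
    "D \<cdot> phi Z = HA (mu Z) \<cdot> l (M Z) \<cdot> KA (tup D (ide (M Z)))"
  and f: "Ar f" "dm f = Z" "cd f = C" "c \<cdot> f = HA beta \<cdot> HA (Mf f) \<cdot> d"
  shows "c \<cdot> beta \<cdot> Mf f = HA beta \<cdot> HA (Mf f) \<cdot> D"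
proof -
  let ?Q = "P (HO C) C"
  let ?alg = "tup (HA beta \<cdot> l C) (b \<cdot> KA (p2 (HO C) C))"
  let ?F = "beta \<cdot> Mf f"
  have alg: "Ar ?alg" "dm ?alg = KO ?Q" "cd ?alg = ?Q" by auto
  have F: "Ar ?F" "dm ?F = M Z" "cd ?F = C" using f by auto
  let ?u1 = "tup (c \<cdot> ?F) ?F" and ?u2 = "tup (HA ?F \<cdot> D) ?F"
  have nat: "l C \<cdot> KA (tup (HA ?F \<cdot> D) (?F \<cdot> ide (M Z))) = HA (Mf ?F) \<cdot> l (M Z) \<cdot> KA (tup D (ide (M Z)))"
    by (rule nat_tup) (use Z D F in auto)
  have em: "beta \<cdot> Mf beta \<cdot> Mf (Mf f) = beta \<cdot> Mf f \<cdot> mu Z"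
    by (rule ext_mu) (use f in auto)
  have emH: "HA beta \<cdot> HA (Mf beta) \<cdot> HA (Mf (Mf f)) \<cdot> x = HA beta \<cdot> HA (Mf f) \<cdot> HA (mu Z) \<cdot> x"
    if "Ar x" "cd x = HO (M (M Z))" for x
  proof -
    have "HA (beta \<cdot> Mf beta \<cdot> Mf (Mf f)) \<cdot> x = HA (beta \<cdot> Mf f \<cdot> mu Z) \<cdot> x" using em by simp
    then show ?thesis using that Z f by simp
  qed
  have "?u1 = ?u2"
  proof (rule free_uniq[of Z ?alg ?Q])
    show "?u1 \<cdot> phi Z = ?alg \<cdot> KA ?u1" using Z f by simp
    have "?u2 \<cdot> phi Z = tup (HA beta \<cdot> HA (Mf f) \<cdot> HA (mu Z) \<cdot> l (M Z) \<cdot> KA (tup D (ide (M Z)))) (b \<cdot> KA beta \<cdot> KA (Mf f))"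
      using Z f D by simp
    also have "\<dots> = ?alg \<cdot> KA ?u2"
    proof -
      have "HA beta \<cdot> l C \<cdot> KA (tup (HA ?F \<cdot> D) (?F \<cdot> ide (M Z))) = HA beta \<cdot> HA (Mf ?F) \<cdot> l (M Z) \<cdot> KA (tup D (ide (M Z)))"
        using nat by simp
      also have "\<dots> = HA beta \<cdot> HA (Mf f) \<cdot> HA (mu Z) \<cdot> l (M Z) \<cdot> KA (tup D (ide (M Z)))"
        using Z f D emH by simp
      finally have e: "HA beta \<cdot> l C \<cdot> KA (tup (HA ?F \<cdot> D) (?F \<cdot> ide (M Z))) = HA beta \<cdot> HA (Mf f) \<cdot> HA (mu Z) \<cdot> l (M Z) \<cdot> KA (tup D (ide (M Z)))" .
      show ?thesis using e Z f D by simp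
    qed
    finally show "?u2 \<cdot> phi Z = ?alg \<cdot> KA ?u2" .
    show "?u1 \<cdot> eta Z = ?u2 \<cdot> eta Z" using Z f D by simp
  qed (use Z f D in simp_all)
  then have "c \<cdot> ?F = HA ?F \<cdot> D" using tup_eq_D[of "c \<cdot> ?F" ?F "HA ?F \<cdot> D" ?F] Z f D by simp
  then show ?thesis using Z f D by simp
qed

lemma comp_eq_x: assumes "g \<cdot> f = k" "Ar f" "Ar g" "cd f = dm g" "Ar x" "cd x = dm f"
  shows "g \<cdot> f \<cdot> x = k \<cdot> x"
proof -
  have "g \<cdot> f \<cdot> x = (g \<cdot> f) \<cdot> x" by (rule assoc[symmetric]) (use assms in auto)
  then show ?thesis using assms(1) by simp
qed

lemma Hcomb: assumes "g \<cdot> f = k" "Ar f" "Ar g" "cd f = dm g" "Ar x" "cd x = HO (dm f)"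
  shows "HA g \<cdot> HA f \<cdot> x = HA k \<cdot> x"
proof -
  have e: "HA g \<cdot> HA f = HA k" using F_comp[OF endoH assms(2,3,4)] assms(1) by simp
  show ?thesis by (rule comp_eq_x[OF e]) (use assms in simp_all)
qed

lemma mu_etaH: assumes "Ob Z" "Ar x" "cd x = HO (M Z)" shows "HA (mu Z) \<cdot> HA (eta (M Z)) \<cdot> x = x"
  using Hcomb[of "mu Z" "eta (M Z)" "ide (M Z)" x] assms by simp

lemma beta_etaH: assumes "Ar x" "cd x = HO C" shows "HA beta \<cdot> HA (eta C) \<cdot> x = x"
  using Hcomb[of beta "eta C" "ide C" x] assms by simp

lemma Mf_etaH: assumes "Ar f" "dm f = Z" "Ar x" "cd x = HO Z" shows "HA (Mf f) \<cdot> HA (eta Z) \<cdot> x = HA (eta (cd f)) \<cdot> HA f \<cdot> x"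
proof -
  have Z: "Ob Z" using assms by (metis dom_obj)
  have "HA (Mf f) \<cdot> HA (eta Z) \<cdot> x = HA (eta (cd f) \<cdot> f) \<cdot> x" by (rule Hcomb) (use assms Z in simp_all)
  then show ?thesis using assms Z by simp
qed

lemma lemB: assumes Y: "Ob Y" and w: "Ar w" "dm w = M Y" "cd w = HO (M Y)"
    "w \<cdot> phi Y = HA (mu Y) \<cdot> l (M Y) \<cdot> KA (tup w (ide (M Y)))"
  and D2: "Ar D2" "dm D2 = M (M Y)" "cd D2 = HO (M (M Y))" "D2 \<cdot> eta (M Y) = HA (eta (M Y)) \<cdot> w"
    "D2 \<cdot> phi (M Y) = HA (mu (M Y)) \<cdot> l (M (M Y)) \<cdot> KA (tup D2 (ide (M (M Y))))"
  shows "w \<cdot> mu Y = HA (mu Y) \<cdot> D2"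
proof -
  let ?Q = "P (HO (M Y)) (M Y)"
  let ?alg = "tup (HA (mu Y) \<cdot> l (M Y)) (phi Y \<cdot> KA (p2 (HO (M Y)) (M Y)))"
  have alg: "Ar ?alg" "dm ?alg = KO ?Q" "cd ?alg = ?Q" using Y by auto
  have wphix: "w \<cdot> phi Y \<cdot> x = HA (mu Y) \<cdot> l (M Y) \<cdot> KA (tup w (ide (M Y))) \<cdot> x" if "Ar x" "cd x = KO (M Y)" for x
    using comp_eq_x[OF w(4)] that w Y by simp
  have D2phix: "D2 \<cdot> phi (M Y) \<cdot> x = HA (mu (M Y)) \<cdot> l (M (M Y)) \<cdot> KA (tup D2 (ide (M (M Y)))) \<cdot> x" if "Ar x" "cd x = KO (M (M Y))" for x
    using comp_eq_x[OF D2(5)] that D2 Y by simp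
  have D2etax: "D2 \<cdot> eta (M Y) \<cdot> x = HA (eta (M Y)) \<cdot> w \<cdot> x" if "Ar x" "cd x = M Y" for x
    using comp_eq_x[OF D2(4)] that D2 Y w by simp
  have nat: "l (M Y) \<cdot> KA (tup (HA (mu Y) \<cdot> D2) (mu Y \<cdot> ide (M (M Y)))) = HA (Mf (mu Y)) \<cdot> l (M (M Y)) \<cdot> KA (tup D2 (ide (M (M Y))))"
    by (rule nat_tup) (use Y D2 in auto)
  have assH: "HA (mu Y) \<cdot> HA (Mf (mu Y)) \<cdot> x = HA (mu Y) \<cdot> HA (mu (M Y)) \<cdot> x" if "Ar x" "cd x = HO (M (M (M Y)))" for x
  proof -
    have "HA (mu Y) \<cdot> HA (Mf (mu Y)) \<cdot> x = HA (mu Y \<cdot> Mf (mu Y)) \<cdot> x" by (rule Hcomb) (use that Y in simp_all)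
    also have "\<dots> = HA (mu Y \<cdot> mu (M Y)) \<cdot> x" using mu_assoc[OF Y] by simp
    finally show ?thesis using that Y by simp
  qed
  have "tup (w \<cdot> mu Y) (mu Y) = tup (HA (mu Y) \<cdot> D2) (mu Y)"
  proof (rule free_uniq[of "M Y" ?alg ?Q])
    show "tup (w \<cdot> mu Y) (mu Y) \<cdot> phi (M Y) = ?alg \<cdot> KA (tup (w \<cdot> mu Y) (mu Y))"
      using Y w by (simp add: wphix)
    have "tup (HA (mu Y) \<cdot> D2) (mu Y) \<cdot> phi (M Y) =
       tup (HA (mu Y) \<cdot> HA (mu (M Y)) \<cdot> l (M (M Y)) \<cdot> KA (tup D2 (ide (M (M Y))))) (phi Y \<cdot> KA (mu Y))"
      using Y D2 by (simp add: D2phix)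
    also have "\<dots> = ?alg \<cdot> KA (tup (HA (mu Y) \<cdot> D2) (mu Y))"
    proof -
      have "HA (mu Y) \<cdot> l (M Y) \<cdot> KA (tup (HA (mu Y) \<cdot> D2) (mu Y \<cdot> ide (M (M Y)))) = HA (mu Y) \<cdot> HA (Mf (mu Y)) \<cdot> l (M (M Y)) \<cdot> KA (tup D2 (ide (M (M Y))))"
        using nat by simp
      also have "\<dots> = HA (mu Y) \<cdot> HA (mu (M Y)) \<cdot> l (M (M Y)) \<cdot> KA (tup D2 (ide (M (M Y))))"
        using Y D2 by (simp add: assH)
      finally show ?thesis using Y D2 by simp
    qed
    finally show "tup (HA (mu Y) \<cdot> D2) (mu Y) \<cdot> phi (M Y) = ?alg \<cdot> KA (tup (HA (mu Y) \<cdot> D2) (mu Y))" .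
    show "tup (w \<cdot> mu Y) (mu Y) \<cdot> eta (M Y) = tup (HA (mu Y) \<cdot> D2) (mu Y) \<cdot> eta (M Y)"
      using Y w D2 by (simp add: D2etax mu_etaH)
  qed (use Y w D2 in simp_all)
  then show ?thesis using tup_eq_D[of "w \<cdot> mu Y" "mu Y" "HA (mu Y) \<cdot> D2" "mu Y"] Y w D2 by simp
qed

section \<open>the solution equation\<close>

lemma sol_iff: assumes X: "Ob X" and e: "Ar e" "dm e = X" "cd e = S (HO (M X)) C"
  and s: "Ar s" "dm s = X" "cd s = C"
  shows "s = cotup (cinv \<cdot> HA beta) (ide C) \<cdot> coprod_arr Ac S i1 i2 (HA (Mf s)) (ide C) \<cdot> e
    \<longleftrightarrow> c \<cdot> s = cotup (HA beta \<cdot> HA (Mf s)) c \<cdot> e"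
proof -
  have r: "cotup (cinv \<cdot> HA beta) (ide C) \<cdot> coprod_arr Ac S i1 i2 (HA (Mf s)) (ide C) \<cdot> e
     = cotup (cinv \<cdot> HA beta \<cdot> HA (Mf s)) (ide C) \<cdot> e"
    using X e s by (simp add: coprod_arr_def)
  have a: "c \<cdot> cotup (cinv \<cdot> HA beta \<cdot> HA (Mf s)) (ide C) \<cdot> e = cotup (HA beta \<cdot> HA (Mf s)) c \<cdot> e"
    using X e s by simp
  have b: "cinv \<cdot> cotup (HA beta \<cdot> HA (Mf s)) c \<cdot> e = cotup (cinv \<cdot> HA beta \<cdot> HA (Mf s)) (ide C) \<cdot> e"
    using X e s by simp
  have cs: "cinv \<cdot> c \<cdot> s = s" using s by simp
  show ?thesis unfolding r
  proof
    assume "s = cotup (cinv \<cdot> HA beta \<cdot> HA (Mf s)) (ide C) \<cdot> e"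
    then have "c \<cdot> s = c \<cdot> cotup (cinv \<cdot> HA beta \<cdot> HA (Mf s)) (ide C) \<cdot> e" by simp
    then show "c \<cdot> s = cotup (HA beta \<cdot> HA (Mf s)) c \<cdot> e" using a by simp
  next
    assume h: "c \<cdot> s = cotup (HA beta \<cdot> HA (Mf s)) c \<cdot> e"
    have "s = cinv \<cdot> c \<cdot> s" using cs by simp
    also have "\<dots> = cinv \<cdot> cotup (HA beta \<cdot> HA (Mf s)) c \<cdot> e" using h by simp
    finally show "s = cotup (cinv \<cdot> HA beta \<cdot> HA (Mf s)) (ide C) \<cdot> e" using b by simp
  qed
qed

lemma sol_ex1: assumes X: "Ob X" and e: "Ar e" "dm e = X" "cd e = S (HO (M X)) C"
  shows "\<exists>!s. Ar s \<and> dm s = X \<and> cd s = C \<and> c \<cdot> s = cotup (HA beta \<cdot> HA (Mf s)) c \<cdot> e"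
proof -
  let ?Y = "S X C" let ?inl = "i1 X C" let ?inr = "i2 X C"
  have Y: "Ob ?Y" using X by simp
  let ?r = "HA (eta ?Y) \<cdot> HA ?inr \<cdot> c"
  let ?w0 = "cotup (cotup (HA (Mf ?inl)) ?r \<cdot> e) ?r"
  have r: "Ar ?r" "dm ?r = C" "cd ?r = HO (M ?Y)" using X by auto
  have w0: "Ar ?w0" "dm ?w0 = ?Y" "cd ?w0 = HO (M ?Y)" using X e by auto
  obtain w where w: "Ar w" "dm w = M ?Y" "cd w = HO (M ?Y)" "w \<cdot> eta ?Y = ?w0"
      "w \<cdot> phi ?Y = HA (mu ?Y) \<cdot> l (M ?Y) \<cdot> KA (tup w (ide (M ?Y)))"
    using ext_D[OF Y w0] by blast
  obtain h where h: "Ar h" "dm h = M ?Y" "cd h = C" "c \<cdot> h = HA h \<cdot> w"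
    using coalg_ex[OF w(1-3)] by blast
  let ?d2 = "HA (eta (M ?Y)) \<cdot> w"
  have d2: "Ar ?d2" "dm ?d2 = M ?Y" "cd ?d2 = HO (M (M ?Y))" using Y w by auto
  obtain D2 where D2: "Ar D2" "dm D2 = M (M ?Y)" "cd D2 = HO (M (M ?Y))" "D2 \<cdot> eta (M ?Y) = ?d2"
      "D2 \<cdot> phi (M ?Y) = HA (mu (M ?Y)) \<cdot> l (M (M ?Y)) \<cdot> KA (tup D2 (ide (M (M ?Y))))"
  proof -
    have MY: "Ob (M ?Y)" using Y by simp
    show ?thesis using ext_D[OF MY d2] that by blast
  qed
  have wmu: "w \<cdot> mu ?Y = HA (mu ?Y) \<cdot> D2" by (rule lemB) (use Y w D2 in simp_all)
  have hx: "c \<cdot> h \<cdot> x = HA h \<cdot> w \<cdot> x" if "Ar x" "cd x = M ?Y" for x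
    using comp_eq_x[OF h(4), of x] that Y h w by simp
  have wx: "w \<cdot> eta ?Y \<cdot> x = ?w0 \<cdot> x" if "Ar x" "cd x = ?Y" for x
    using comp_eq_x[OF w(4), of x] that Y w by simp
  have hmu: "h \<cdot> mu ?Y = beta \<cdot> Mf h"
  proof (rule coind[of D2 "M (M ?Y)"])
    have "c \<cdot> h \<cdot> mu ?Y = HA h \<cdot> w \<cdot> mu ?Y" using hx[of "mu ?Y"] Y by simp
    then show "c \<cdot> (h \<cdot> mu ?Y) = HA (h \<cdot> mu ?Y) \<cdot> D2" using wmu Y h w D2 by simp
    show "c \<cdot> (beta \<cdot> Mf h) = HA (beta \<cdot> Mf h) \<cdot> D2"
    proof -
      have "c \<cdot> beta \<cdot> Mf h = HA beta \<cdot> HA (Mf h) \<cdot> D2"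
      proof (rule lemA[of "M ?Y" ?d2])
        have "HA beta \<cdot> HA (Mf h) \<cdot> HA (eta (M ?Y)) \<cdot> w = HA beta \<cdot> HA (eta C) \<cdot> HA h \<cdot> w"
          using Mf_etaH[of h "M ?Y" w] h w Y by simp
        also have "\<dots> = HA h \<cdot> w" using beta_etaH[of "HA h \<cdot> w"] h w Y by simp
        finally show "c \<cdot> h = HA beta \<cdot> HA (Mf h) \<cdot> ?d2" using h by simp
      qed (use Y d2 D2 h in simp_all)
      then show ?thesis using Y h D2 by simp
    qed
  qed (use Y h D2 in simp_all)
  have hk: "h = beta \<cdot> Mf (h \<cdot> eta ?Y)"
  proof -
    have "beta \<cdot> Mf h \<cdot> Mf (eta ?Y) = h \<cdot> mu ?Y \<cdot> Mf (eta ?Y)"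
      using comp_eq_x[OF hmu[symmetric], of "Mf (eta ?Y)"] Y h by simp
    also have "\<dots> = h" using Y h by (simp add: mu_Meta)
    finally show ?thesis using Y h by simp
  qed
  have inr_id: "h \<cdot> eta ?Y \<cdot> ?inr = ide C"
  proof (rule coind[of c C])
    show "c \<cdot> (h \<cdot> eta ?Y \<cdot> ?inr) = HA (h \<cdot> eta ?Y \<cdot> ?inr) \<cdot> c"
      using hx[of "eta ?Y \<cdot> ?inr"] wx[of ?inr] X Y h w e by simp
  qed (use X Y h in simp_all)
  have rr: "HA h \<cdot> HA (eta ?Y) \<cdot> HA ?inr \<cdot> c = c"
    using arg_cong[OF inr_id, of "\<lambda>z. HA z \<cdot> c"] X Y h by simp
  let ?s0 = "h \<cdot> eta ?Y \<cdot> ?inl"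
  show ?thesis
  proof (rule ex1I[of _ ?s0])
    have hl: "HA h \<cdot> HA (Mf ?inl) = HA beta \<cdot> HA (Mf ?s0)"
      using arg_cong[OF hk, of "\<lambda>z. HA z \<cdot> HA (Mf ?inl)"] X Y h by simp
    have "c \<cdot> ?s0 = cotup (HA beta \<cdot> HA (Mf ?s0)) c \<cdot> e"
      using hx[of "eta ?Y \<cdot> ?inl"] wx[of ?inl] X Y h w e hl rr by simp
    then show "Ar ?s0 \<and> dm ?s0 = X \<and> cd ?s0 = C \<and> c \<cdot> ?s0 = cotup (HA beta \<cdot> HA (Mf ?s0)) c \<cdot> e"
      using X Y h by simp
  next
    fix s assume "Ar s \<and> dm s = X \<and> cd s = C \<and> c \<cdot> s = cotup (HA beta \<cdot> HA (Mf s)) c \<cdot> e"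
    then have s: "Ar s" "dm s = X" "cd s = C" "c \<cdot> s = cotup (HA beta \<cdot> HA (Mf s)) c \<cdot> e" by auto
    let ?f = "cotup s (ide C)"
    have f: "Ar ?f" "dm ?f = ?Y" "cd ?f = C" using s by auto
    have eqMf: "Mf ?f \<cdot> Mf ?inl = Mf s"
    proof -
      have "Mf ?f \<cdot> Mf ?inl = Mf (?f \<cdot> ?inl)" by (rule Mf_comp[symmetric]) (use X f in simp_all)
      also have "\<dots> = Mf s" using s by simp
      finally show ?thesis .
    qed
    have fl: "HA (Mf ?f) \<cdot> HA (Mf ?inl) = HA (Mf s)"
    proof -
      have "HA (Mf ?f) \<cdot> HA (Mf ?inl) = HA (Mf ?f \<cdot> Mf ?inl)" by (rule F_comp[OF endoH, symmetric]) (use X f in simp_all)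
      also have "\<dots> = HA (Mf s)" by (simp only: eqMf)
      finally show ?thesis .
    qed
    have fr: "HA beta \<cdot> HA (Mf ?f) \<cdot> HA (eta ?Y) \<cdot> HA ?inr \<cdot> c = c"
    proof -
      have "HA beta \<cdot> HA (Mf ?f) \<cdot> HA (eta ?Y) \<cdot> HA ?inr \<cdot> c = HA beta \<cdot> HA (eta C) \<cdot> HA ?f \<cdot> HA ?inr \<cdot> c"
        using Mf_etaH[of ?f ?Y "HA ?inr \<cdot> c"] X f by simp
      also have "\<dots> = HA ?f \<cdot> HA ?inr \<cdot> c" using beta_etaH[of "HA ?f \<cdot> HA ?inr \<cdot> c"] X f by simp
      also have "\<dots> = HA (ide C) \<cdot> c" by (rule Hcomb) (use X s in simp_all)
      also have "\<dots> = c" by simp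
      finally show ?thesis .
    qed
    have cf: "c \<cdot> ?f = HA beta \<cdot> HA (Mf ?f) \<cdot> ?w0"
    proof (rule cotup_ext[of _ _ X C])
      show "(c \<cdot> ?f) \<cdot> ?inl = (HA beta \<cdot> HA (Mf ?f) \<cdot> ?w0) \<cdot> ?inl"
        using X s f e fl fr by simp
      show "(c \<cdot> ?f) \<cdot> ?inr = (HA beta \<cdot> HA (Mf ?f) \<cdot> ?w0) \<cdot> ?inr"
        using X s f e fl fr by simp
    qed (use X s f e in simp_all)
    have cA: "c \<cdot> beta \<cdot> Mf ?f = HA beta \<cdot> HA (Mf ?f) \<cdot> w"
      by (rule lemA[of ?Y ?w0]) (use Y w0 w f cf in simp_all)
    have bf: "beta \<cdot> Mf ?f = h"
      by (rule coind[of w "M ?Y"]) (use Y w f h cA in simp_all)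
    have "h \<cdot> eta ?Y \<cdot> ?inl = beta \<cdot> Mf ?f \<cdot> eta ?Y \<cdot> ?inl"
      using arg_cong[OF bf, of "\<lambda>z. z \<cdot> eta ?Y \<cdot> ?inl"] X Y f h by simp
    also have "\<dots> = s" using X Y f s by simp
    finally show "s = ?s0" by simp
  qed
qed

lemma cia: "is_cia Ac S i1 i2 (HM_functor Ac H K M phi eta) C (cinv \<cdot> HA beta)"
proof -
  have "\<forall>X \<in> Obj Ac. \<forall>e \<in> hom Ac X (S (HO (M X)) C).
        (\<exists>!s. s \<in> hom Ac X C \<and>
              s = cotup (cinv \<cdot> HA beta) (ide C) \<cdot> coprod_arr Ac S i1 i2 (HA (Mf s)) (ide C) \<cdot> e)"
  proof (intro ballI)
    fix X e assume X: "Ob X" and "e \<in> hom Ac X (S (HO (M X)) C)"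
    then have e: "Ar e" "dm e = X" "cd e = S (HO (M X)) C" by (auto simp: hom_iff)
    have eqv: "(s \<in> hom Ac X C \<and> s = cotup (cinv \<cdot> HA beta) (ide C) \<cdot> coprod_arr Ac S i1 i2 (HA (Mf s)) (ide C) \<cdot> e)
      \<longleftrightarrow> (Ar s \<and> dm s = X \<and> cd s = C \<and> c \<cdot> s = cotup (HA beta \<cdot> HA (Mf s)) c \<cdot> e)" for s
    proof (cases "s \<in> hom Ac X C")
      case True
      then have s: "Ar s" "dm s = X" "cd s = C" by (auto simp: hom_iff)
      show ?thesis using sol_iff[OF X e s] True s by blast
    next
      case False then show ?thesis by (auto simp: hom_iff)
    qed
    show "\<exists>!s. s \<in> hom Ac X C \<and>
              s = cotup (cinv \<cdot> HA beta) (ide C) \<cdot> coprod_arr Ac S i1 i2 (HA (Mf s)) (ide C) \<cdot> e"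
      unfolding eqv by (rule sol_ex1[OF X e])
  qed
  moreover have "cinv \<cdot> HA beta \<in> hom Ac (HO (M C)) C" by (simp add: hom_iff)
  ultimately show ?thesis unfolding is_cia_def HM_functor_def by simp
qed

end

theorem mainTheorem2:
  fixes Ac :: "('o, 'm) category"
    and P :: "'o \<Rightarrow> 'o \<Rightarrow> 'o" and p1 p2 :: "'o \<Rightarrow> 'o \<Rightarrow> 'm"
    and S :: "'o \<Rightarrow> 'o \<Rightarrow> 'o" and i1 i2 :: "'o \<Rightarrow> 'o \<Rightarrow> 'm"
    and H K :: "('o, 'm) endofunctor"
    and C :: 'o and c :: 'm
    and M :: "'o \<Rightarrow> 'o" and phi eta :: "'o \<Rightarrow> 'm"
    and l :: "'o \<Rightarrow> 'm" and b :: 'm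
  assumes "is_category Ac"
    and "has_binary_products Ac P p1 p2"
    and "has_binary_coproducts Ac S i1 i2"
    and "is_endofunctor Ac H"
    and "is_endofunctor Ac K"
    and "is_terminal_coalgebra Ac H C c"
    and "has_free_algebras Ac K M phi eta"
    and "is_GSOS_rule Ac P p1 p2 H K M phi eta l"
    and "is_l_interpretation Ac P p1 p2 H K M phi eta l C c b"
  shows "is_cia Ac S i1 i2 (HM_functor Ac H K M phi eta) C
           (Comp Ac (inverse_arr Ac c) (FArr H (sharp Ac K M phi eta b)))"
proof -
  interpret gs Ac P p1 p2 S i1 i2 H K C c M phi eta l b
    by (rule gs.intro) (rule assms)+
  show ?thesis using cia unfolding cinv_def .
qed

end
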